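(* Let $G=(V,E)$ be a finite, simple, connected $K_w$-minor-free graph and $U\subseteq V$ with $|U|\ge\max(w,4)$. Let $a\in U$ be a $U$-good node with witnessing set $U_a$ and write $\epsilon=\epsilon_U$. Then for every $b\in U_a$ there exist at least $\lceil\epsilon(|U|-2)\rceil$ nodes $c\in U$ such that, for each of them, for at least $\lceil\epsilon(|U|-3)\rceil$ nodes $d\in U$ the set $\{(a,b),(c,d)\}$ is a good quadruple.
   Context: The interval $I(u,v)$ is the set of nodes on at least one shortest $u$–$v$ path in $G$. A quadruple in $U$ is a set $\{(a,b),(c,d)\}$ of two unordered pairs with $a,b,c,d\in U$ distinct; it is good if $I(a,b)\cap I(c,d)\ne\emptyset$. Let $q(U)$ and $q_{\mathrm{good}}(U)$ be the numbers of quadruples and good quadruples in $U$, and $\epsilon_U=q_{\mathrm{good}}(U)/(8q(U))$. A node $a\in U$ is $U$-good if there is a subset $U_a\subseteq U$ (a witnessing set) of size at least $\lceil 4\epsilon_U(|U|-1)\rceil$ such that for every $b\in U_a$ the number of pairs $c,d\in U$ for which $\{(a,b),(c,d)\}$ is a good quadruple is at least $\lceil 4\epsilon_U\binom{|U|-2}{2}\rceil$. *)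

theory Defs
  imports Complex_Main
begin

definition simple_graph :: "'a set \<Rightarrow> ('a \<Rightarrow> 'a \<Rightarrow> bool) \<Rightarrow> bool" where
  "simple_graph V E \<longleftrightarrow> finite V \<and> (\<forall>x y. E x y \<longrightarrow> x \<in> V \<and> y \<in> V)
     \<and> (\<forall>x y. E x y \<longrightarrow> E y x) \<and> (\<forall>x. \<not> E x x)"

definition walk_in :: "('a \<Rightarrow> 'a \<Rightarrow> bool) \<Rightarrow> 'a set \<Rightarrow> 'a \<Rightarrow> 'a \<Rightarrow> 'a list \<Rightarrow> bool" where
  "walk_in E S u v xs \<longleftrightarrow> xs \<noteq> [] \<and> hd xs = u \<and> last xs = v \<and> set xs \<subseteq> S
     \<and> (\<forall>i. Suc i < length xs \<longrightarrow> E (xs ! i) (xs ! Suc i))"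

definition connected_set :: "('a \<Rightarrow> 'a \<Rightarrow> bool) \<Rightarrow> 'a set \<Rightarrow> bool" where
  "connected_set E S \<longleftrightarrow> (\<forall>u\<in>S. \<forall>v\<in>S. \<exists>xs. walk_in E S u v xs)"

definition connected_graph :: "'a set \<Rightarrow> ('a \<Rightarrow> 'a \<Rightarrow> bool) \<Rightarrow> bool" where
  "connected_graph V E \<longleftrightarrow> V \<noteq> {} \<and> connected_set E V"

definition has_clique_minor :: "'a set \<Rightarrow> ('a \<Rightarrow> 'a \<Rightarrow> bool) \<Rightarrow> nat \<Rightarrow> bool" where
  "has_clique_minor V E w \<longleftrightarrow> (\<exists>B :: nat \<Rightarrow> 'a set.
     (\<forall>i<w. B i \<noteq> {} \<and> B i \<subseteq> V \<and> connected_set E (B i))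
   \<and> (\<forall>i<w. \<forall>j<w. i \<noteq> j \<longrightarrow> B i \<inter> B j = {})
   \<and> (\<forall>i<w. \<forall>j<w. i \<noteq> j \<longrightarrow> (\<exists>x\<in>B i. \<exists>y\<in>B j. E x y)))"

definition gdist :: "'a set \<Rightarrow> ('a \<Rightarrow> 'a \<Rightarrow> bool) \<Rightarrow> 'a \<Rightarrow> 'a \<Rightarrow> nat" where
  "gdist V E u v = (LEAST n. \<exists>xs. walk_in E V u v xs \<and> length xs = Suc n)"

definition interval :: "'a set \<Rightarrow> ('a \<Rightarrow> 'a \<Rightarrow> bool) \<Rightarrow> 'a \<Rightarrow> 'a \<Rightarrow> 'a set" where
  "interval V E u v = {x. \<exists>xs. walk_in E V u v xs \<and> length xs = Suc (gdist V E u v) \<and> x \<in> set xs}"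

definition good_quad :: "'a set \<Rightarrow> ('a \<Rightarrow> 'a \<Rightarrow> bool) \<Rightarrow> 'a \<Rightarrow> 'a \<Rightarrow> 'a \<Rightarrow> 'a \<Rightarrow> bool" where
  "good_quad V E a b c d \<longleftrightarrow> interval V E a b \<inter> interval V E c d \<noteq> {}"

definition quads :: "'a set \<Rightarrow> 'a set set set" where
  "quads U = {{{a,b},{c,d}} | a b c d. a \<in> U \<and> b \<in> U \<and> c \<in> U \<and> d \<in> U \<and> distinct [a,b,c,d]}"

definition good_quads :: "'a set \<Rightarrow> ('a \<Rightarrow> 'a \<Rightarrow> bool) \<Rightarrow> 'a set \<Rightarrow> 'a set set set" where
  "good_quads V E U = {{{a,b},{c,d}} | a b c d. a \<in> U \<and> b \<in> U \<and> c \<in> U \<and> d \<in> U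
      \<and> distinct [a,b,c,d] \<and> good_quad V E a b c d}"

definition eps :: "'a set \<Rightarrow> ('a \<Rightarrow> 'a \<Rightarrow> bool) \<Rightarrow> 'a set \<Rightarrow> real" where
  "eps V E U = real (card (good_quads V E U)) / (8 * real (card (quads U)))"

definition good_partner_pairs :: "'a set \<Rightarrow> ('a \<Rightarrow> 'a \<Rightarrow> bool) \<Rightarrow> 'a set \<Rightarrow> 'a \<Rightarrow> 'a \<Rightarrow> nat" where
  "good_partner_pairs V E U a b = card {{c,d} | c d. c \<in> U \<and> d \<in> U \<and> distinct [a,b,c,d]
      \<and> good_quad V E a b c d}"

definition witnessing_set :: "'a set \<Rightarrow> ('a \<Rightarrow> 'a \<Rightarrow> bool) \<Rightarrow> 'a set \<Rightarrow> 'a \<Rightarrow> 'a set \<Rightarrow> bool" where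
  "witnessing_set V E U a Ua \<longleftrightarrow> a \<in> U \<and> Ua \<subseteq> U
     \<and> int (card Ua) \<ge> \<lceil>4 * eps V E U * (real (card U) - 1)\<rceil>
     \<and> (\<forall>b\<in>Ua. int (good_partner_pairs V E U a b)
            \<ge> \<lceil>4 * eps V E U * real ((card U - 2) choose 2)\<rceil>)"

definition U_good :: "'a set \<Rightarrow> ('a \<Rightarrow> 'a \<Rightarrow> bool) \<Rightarrow> 'a set \<Rightarrow> 'a \<Rightarrow> bool" where
  "U_good V E U a \<longleftrightarrow> (\<exists>Ua. witnessing_set V E U a Ua)"

end

theory Submission
  imports Defs
begin

lemma two_choose2: "real ((m::nat) choose 2) = real m * (real m - 1) / 2"
proof -
  have "2 * (m choose 2) = m * (m - 1)"
  proof -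
    have "even (m * (m - 1))" by (cases "even m") auto
    then show ?thesis by (simp add: choose_two)
  qed
  then have "2 * real (m choose 2) = real m * real (m - 1)"
    by (metis of_nat_mult of_nat_numeral)
  moreover have "real (m - 1) = real m - 1 \<or> m = 0" by (cases m) auto
  ultimately show ?thesis by auto
qed

theorem mainTheorem8:
  fixes V :: "'a set" and E :: "'a \<Rightarrow> 'a \<Rightarrow> bool" and w :: nat
    and U Ua :: "'a set" and a :: 'a
  assumes "simple_graph V E"
    and "connected_graph V E"
    and "\<not> has_clique_minor V E w"
    and "U \<subseteq> V"
    and "card U \<ge> max w 4"
    and "witnessing_set V E U a Ua"
  shows "\<forall>b\<in>Ua. int (card {c \<in> U.
            int (card {d \<in> U. distinct [a,b,c,d] \<and> good_quad V E a b c d})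
              \<ge> \<lceil>eps V E U * (real (card U) - 3)\<rceil>})
         \<ge> \<lceil>eps V E U * (real (card U) - 2)\<rceil>"
proof
  fix b assume bU: "b \<in> Ua"
  define n where "n = card U"
  define e where "e = eps V E U"
  define Q where "Q c d \<longleftrightarrow> distinct [a,b,c,d] \<and> good_quad V E a b c d" for c d
  define deg where "deg c = card {d \<in> U. Q c d}" for c
  define t where "t = \<lceil>e * (real n - 3)\<rceil>"
  have n4: "n \<ge> 4" using assms(5) n_def by simp
  have finU: "finite U" using n4 n_def card.infinite by fastforce
  have aU: "a \<in> U" and bU': "b \<in> U" using assms(6) bU unfolding witnessing_set_def by auto
  have e0: "e \<ge> 0" unfolding e_def eps_def by simp
  have P: "int (good_partner_pairs V E U a b) \<ge> \<lceil>4 * e * real ((n - 2) choose 2)\<rceil>"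
    using assms(6) bU unfolding witnessing_set_def e_def n_def by auto
  have "real (n - 2) = real n - 2" using n4 by simp
  then have ch: "real ((n - 2) choose 2) = (real n - 2) * (real n - 3) / 2"
    by (simp add: two_choose2)
  have P2: "real (good_partner_pairs V E U a b) \<ge> 2 * e * (real n - 2) * (real n - 3)"
  proof -
    have "4 * e * real ((n - 2) choose 2) \<le> real_of_int \<lceil>4 * e * real ((n - 2) choose 2)\<rceil>"
      by (rule le_of_int_ceiling)
    also have "\<dots> \<le> real (good_partner_pairs V E U a b)" using P
      by (metis of_int_le_iff of_int_of_nat_eq)
    finally show ?thesis using ch by (simp add: algebra_simps)
  qed
  define C where "C = U - {a,b}"
  have finC: "finite C" using finU C_def by simp
  define Ord where "Ord = Sigma C (\<lambda>c. {d \<in> U. Q c d})"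
  have PS: "{{c,d} | c d. c \<in> U \<and> d \<in> U \<and> distinct [a,b,c,d] \<and> good_quad V E a b c d}
      = (\<lambda>(c,d). {c,d}) ` Ord"
    unfolding Ord_def C_def Q_def by auto
  have finOrd: "finite Ord" unfolding Ord_def using finC finU by auto
  have "good_partner_pairs V E U a b \<le> card Ord"
    unfolding good_partner_pairs_def PS by (rule card_image_le[OF finOrd])
  also have "card Ord = (\<Sum>c\<in>C. deg c)"
    unfolding Ord_def deg_def using finC finU by (simp add: card_SigmaI)
  finally have sumge: "2 * e * (real n - 2) * (real n - 3) \<le> (\<Sum>c\<in>C. real (deg c))"
    using P2 by (metis (mono_tags, lifting) of_nat_le_iff of_nat_sum order_trans)
  show "int (card {c \<in> U. int (card {d \<in> U. distinct [a,b,c,d] \<and> good_quad V E a b c d})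
              \<ge> \<lceil>eps V E U * (real (card U) - 3)\<rceil>}) \<ge> \<lceil>eps V E U * (real (card U) - 2)\<rceil>"
  proof (cases "a = b")
    case True
    then have "C = {} \<or> (\<forall>c\<in>C. deg c = 0)" unfolding deg_def Q_def by auto
    then have "(\<Sum>c\<in>C. real (deg c)) = 0" by auto
    then have "2 * e * ((real n - 2) * (real n - 3)) \<le> 0" using sumge by (simp add: algebra_simps)
    moreover have "(real n - 2) * (real n - 3) > 0" using n4 by simp
    ultimately have "e \<le> 0" by (smt (verit) mult_pos_pos)
    then have "e = 0" using e0 by simp
    then show ?thesis unfolding e_def[symmetric] n_def[symmetric] by simp
  next
    case False
    have cardC: "card C = n - 2" unfolding C_def n_def using aU bU' False finU
      by (simp add: card_Diff_subset)
    define Gd where "Gd = {c \<in> C. int (deg c) \<ge> t}"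
    define Bd where "Bd = {c \<in> C. \<not> int (deg c) \<ge> t}"
    have degle: "real (deg c) \<le> real n - 3" if "c \<in> C" for c
    proof -
      have "{d \<in> U. Q c d} \<subseteq> U - {a,b,c}" unfolding Q_def by auto
      then have "deg c \<le> card (U - {a,b,c})" unfolding deg_def using finU
        by (simp add: card_mono)
      also have "card (U - {a,b,c}) = n - 3" using that aU bU' False finU unfolding C_def n_def
        by (auto simp add: card_Diff_subset card_insert_if)
      finally show ?thesis using n4 by simp
    qed
    have degB: "real (deg c) \<le> e * (real n - 3)" if "c \<in> Bd" for c
    proof -
      have "int (deg c) < t" using that Bd_def by auto
      then have "real_of_int (int (deg c)) < real_of_int t" by linarith
      moreover have "real_of_int t < e * (real n - 3) + 1" unfolding t_def by linarith
      ultimately have "real (deg c) < e * (real n - 3) + 1" by simp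
      moreover have "real_of_int (int (deg c)) \<le> real_of_int t - 1" using \<open>int (deg c) < t\<close> by linarith
      moreover have "real_of_int t - 1 < e * (real n - 3)" unfolding t_def by linarith
      ultimately show ?thesis by simp
    qed
    have CGB: "C = Gd \<union> Bd" "Gd \<inter> Bd = {}" unfolding Gd_def Bd_def by auto
    have finG: "finite Gd" "finite Bd" using finC CGB by auto
    have split: "(\<Sum>c\<in>C. real (deg c)) = (\<Sum>c\<in>Gd. real (deg c)) + (\<Sum>c\<in>Bd. real (deg c))"
      using CGB finG by (simp add: sum.union_disjoint)
    have s1: "(\<Sum>c\<in>Gd. real (deg c)) \<le> real (card Gd) * (real n - 3)"
      using sum_bounded_above[of Gd "\<lambda>c. real (deg c)" "real n - 3"] degle unfolding Gd_def by auto
    have s2: "(\<Sum>c\<in>Bd. real (deg c)) \<le> real (card Bd) * (e * (real n - 3))"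
      using sum_bounded_above[of Bd "\<lambda>c. real (deg c)" "e * (real n - 3)"] degB by auto
    have "card Bd \<le> card C" using CGB finC by (simp add: card_mono)
    then have "real (card Bd) \<le> real n - 2" using cardC n4 by simp
    moreover have "e * (real n - 3) \<ge> 0" using e0 n4 by simp
    ultimately have s3: "real (card Bd) * (e * (real n - 3)) \<le> (real n - 2) * (e * (real n - 3))"
      by (rule mult_right_mono)
    have "2 * e * (real n - 2) * (real n - 3) \<le> real (card Gd) * (real n - 3) + (real n - 2) * (e * (real n - 3))"
      using sumge split s1 s2 s3 by linarith
    then have "(e * (real n - 2)) * (real n - 3) \<le> real (card Gd) * (real n - 3)"
      by (simp add: algebra_simps)
    moreover have "real n - 3 > 0" using n4 by simp
    ultimately have k: "e * (real n - 2) \<le> real (card Gd)" by simp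
    have sub: "Gd \<subseteq> {c \<in> U. int (card {d \<in> U. distinct [a,b,c,d] \<and> good_quad V E a b c d})
              \<ge> \<lceil>eps V E U * (real (card U) - 3)\<rceil>}"
      unfolding Gd_def C_def deg_def Q_def t_def e_def n_def by auto
    have "card Gd \<le> card {c \<in> U. int (card {d \<in> U. distinct [a,b,c,d] \<and> good_quad V E a b c d})
              \<ge> \<lceil>eps V E U * (real (card U) - 3)\<rceil>}"
      using sub finU by (simp add: card_mono)
    moreover have "\<lceil>e * (real n - 2)\<rceil> \<le> int (card Gd)" using k
      by (simp add: ceiling_le_iff)
    ultimately show ?thesis unfolding e_def n_def by linarith
  qed
qed

end
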